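(* Let $G$ be a connected graph. If some graph equimorphic to $G$ is not connected, then there are infinitely many pairwise non-isomorphic graphs equimorphic to $G$.
   Context: Graphs are undirected and loopless. $G$ embeds into $G'$ if $G$ is isomorphic to an induced subgraph of $G'$; $G,G'$ are equimorphic if each embeds into the other. *)

theory Defs
  imports Main
begin

type_synonym 'a graph = "'a set \<times> ('a \<Rightarrow> 'a \<Rightarrow> bool)"

definition verts :: "'a graph \<Rightarrow> 'a set" where "verts G = fst G"
definition adj :: "'a graph \<Rightarrow> 'a \<Rightarrow> 'a \<Rightarrow> bool" where "adj G = snd G"

definition is_graph :: "'a graph \<Rightarrow> bool" where
  "is_graph G \<longleftrightarrow>
     (\<forall>x y. adj G x y \<longrightarrow> x \<in> verts G \<and> y \<in> verts G) \<and>
     (\<forall>x y. adj G x y \<longrightarrow> adj G y x) \<and>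
     (\<forall>x. \<not> adj G x x)"

text \<open>G embeds into H: G is isomorphic to an induced subgraph of H.\<close>
definition embeds :: "'a graph \<Rightarrow> 'b graph \<Rightarrow> bool" where
  "embeds G H \<longleftrightarrow> (\<exists>f. inj_on f (verts G) \<and> f ` verts G \<subseteq> verts H \<and>
     (\<forall>x\<in>verts G. \<forall>y\<in>verts G. adj G x y \<longleftrightarrow> adj H (f x) (f y)))"

definition equimorphic :: "'a graph \<Rightarrow> 'b graph \<Rightarrow> bool" where
  "equimorphic G H \<longleftrightarrow> embeds G H \<and> embeds H G"

definition isomorphic :: "'a graph \<Rightarrow> 'b graph \<Rightarrow> bool" where
  "isomorphic G H \<longleftrightarrow> (\<exists>f. bij_betw f (verts G) (verts H) \<and>
     (\<forall>x\<in>verts G. \<forall>y\<in>verts G. adj G x y \<longleftrightarrow> adj H (f x) (f y)))"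

definition connected_graph :: "'a graph \<Rightarrow> bool" where
  "connected_graph G \<longleftrightarrow> verts G \<noteq> {} \<and>
     (\<forall>x\<in>verts G. \<forall>y\<in>verts G. (adj G)\<^sup>*\<^sup>* x y)"

end

theory Submission
  imports Defs
begin


lemma rtranclp_map:
  assumes "r\<^sup>*\<^sup>* a b" and "\<And>x y. r x y \<Longrightarrow> s (h x) (h y)"
  shows "s\<^sup>*\<^sup>* (h a) (h b)"
  using assms(1) by induction (auto intro: rtranclp.rtrancl_into_rtrancl assms(2))

lemma rtranclp_closed:
  assumes "r\<^sup>*\<^sup>* a b" and "a \<in> P" and "\<And>x y. r x y \<Longrightarrow> x \<in> P \<Longrightarrow> y \<in> P"
  shows "b \<in> P"
  using assms(1) by induction (use assms in auto)

lemma graph_reach_sym: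
  assumes "is_graph K" "(adj K)\<^sup>*\<^sup>* x y"
  shows "(adj K)\<^sup>*\<^sup>* y x"
proof -
  have "symp (adj K)" using assms(1) unfolding is_graph_def symp_def by blast
  then have "symp (adj K)\<^sup>*\<^sup>*" by (rule symp_rtranclp)
  then show ?thesis using assms(2) by (meson sympD)
qed

definition Q :: "nat \<Rightarrow> 'a graph \<Rightarrow> bool" where
  "Q k K \<longleftrightarrow> (\<exists>X \<subseteq> verts K. finite X \<and> card X = k \<and>
      (\<forall>x\<in>X. \<forall>y\<in>X. x \<noteq> y \<longrightarrow> \<not> (adj K)\<^sup>*\<^sup>* x y))"

lemma iso_Q:
  assumes "is_graph K2" "isomorphic K1 K2" "Q k K1"
  shows "Q k K2"
proof -
  obtain f where bij: "bij_betw f (verts K1) (verts K2)"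
    and ad: "\<forall>x\<in>verts K1. \<forall>y\<in>verts K1. adj K1 x y \<longleftrightarrow> adj K2 (f x) (f y)"
    using assms(2) unfolding isomorphic_def by blast
  obtain X where X: "X \<subseteq> verts K1" "finite X" "card X = k"
    "\<forall>x\<in>X. \<forall>y\<in>X. x \<noteq> y \<longrightarrow> \<not> (adj K1)\<^sup>*\<^sup>* x y"
    using assms(3) unfolding Q_def by blast
  define g where "g = inv_into (verts K1) f"
  have gf: "g (f x) = x" if "x \<in> verts K1" for x
    using bij that unfolding g_def by (simp add: bij_betw_inv_into_left)
  have bk: "(adj K1)\<^sup>*\<^sup>* (g a) (g b)" if "(adj K2)\<^sup>*\<^sup>* a b" "a \<in> verts K2" for a b
    using that
  proof induction
    case base then show ?case by simp
  next
    case (step y z)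
    have yv: "y \<in> verts K2"
      using step.hyps(1) step.prems
      by (induction rule: rtranclp_induct) (use assms(1) in \<open>auto simp: is_graph_def\<close>)
    have zv: "z \<in> verts K2" using step.hyps(2) assms(1) by (auto simp: is_graph_def)
    have gy: "g y \<in> verts K1" "f (g y) = y" using yv bij unfolding g_def
      by (auto simp: bij_betw_def inv_into_into f_inv_into_f)
    have gz: "g z \<in> verts K1" "f (g z) = z" using zv bij unfolding g_def
      by (auto simp: bij_betw_def inv_into_into f_inv_into_f)
    have "adj K1 (g y) (g z)" using ad gy gz step.hyps(2) by metis
    then show ?case using step by (meson rtranclp.rtrancl_into_rtrancl)
  qed
  show ?thesis unfolding Q_def
  proof (intro exI conjI)
    show "f ` X \<subseteq> verts K2" using X bij bij_betw_imp_surj_on by blast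
    show "finite (f ` X)" using X by simp
    have "inj_on f X" using bij X bij_betw_imp_inj_on inj_on_subset by blast
    then show "card (f ` X) = k" using X card_image by blast
    show "\<forall>x\<in>f ` X. \<forall>y\<in>f ` X. x \<noteq> y \<longrightarrow> \<not> (adj K2)\<^sup>*\<^sup>* x y"
    proof (intro ballI impI notI)
      fix x y assume "x \<in> f ` X" "y \<in> f ` X" "x \<noteq> y" "(adj K2)\<^sup>*\<^sup>* x y"
      then obtain a b where ab: "a \<in> X" "b \<in> X" "x = f a" "y = f b" by blast
      have "a \<in> verts K1" "b \<in> verts K1" using ab X by auto
      moreover have "x \<in> verts K2" using ab X bij bij_betw_apply by fastforce
      ultimately have "(adj K1)\<^sup>*\<^sup>* a b" using bk[of x y] \<open>(adj K2)\<^sup>*\<^sup>* x y\<close> gf ab by metis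
      moreover have "a \<noteq> b" using ab \<open>x \<noteq> y\<close> by auto
      ultimately show False using X ab by blast
    qed
  qed
qed

lemma pieces_Q:
  fixes K :: "'a graph" and Pc :: "nat \<Rightarrow> 'a set" and c :: "nat \<Rightarrow> 'a"
  assumes gr: "is_graph K"
    and cov: "verts K = (\<Union>i\<le>n. Pc i)"
    and cen: "\<And>i. i \<le> n \<Longrightarrow> c i \<in> Pc i"
    and conn: "\<And>i x. i \<le> n \<Longrightarrow> x \<in> Pc i \<Longrightarrow> (adj K)\<^sup>*\<^sup>* (c i) x"
    and disj: "\<And>i j. i \<le> n \<Longrightarrow> j \<le> n \<Longrightarrow> i \<noteq> j \<Longrightarrow> Pc i \<inter> Pc j = {}"
    and clo: "\<And>i x y. i \<le> n \<Longrightarrow> x \<in> Pc i \<Longrightarrow> adj K x y \<Longrightarrow> y \<in> Pc i"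
  shows "Q (Suc n) K" and "\<And>k. k > Suc n \<Longrightarrow> \<not> Q k K"
proof -
  have cinj: "inj_on c {..n}"
    using cen disj unfolding inj_on_def by (metis atMost_iff disjoint_iff)
  show "Q (Suc n) K" unfolding Q_def
  proof (intro exI conjI)
    show "c ` {..n} \<subseteq> verts K" using cen cov by blast
    show "finite (c ` {..n})" by simp
    show "card (c ` {..n}) = Suc n" using cinj by (simp add: card_image)
    show "\<forall>x\<in>c ` {..n}. \<forall>y\<in>c ` {..n}. x \<noteq> y \<longrightarrow> \<not> (adj K)\<^sup>*\<^sup>* x y"
    proof (intro ballI impI notI)
      fix x y assume xy: "x \<in> c ` {..n}" "y \<in> c ` {..n}" "x \<noteq> y" "(adj K)\<^sup>*\<^sup>* x y"
      then obtain i j where ij: "i \<le> n" "j \<le> n" "x = c i" "y = c j" by auto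
      have "y \<in> Pc i"
        using rtranclp_closed[OF xy(4), of "Pc i"] cen ij clo by blast
      then have "i = j" using disj ij cen by blast
      then show False using ij xy by simp
    qed
  qed
  fix k assume k: "k > Suc n"
  show "\<not> Q k K"
  proof
    assume "Q k K"
    then obtain X where X: "X \<subseteq> verts K" "finite X" "card X = k"
      "\<forall>x\<in>X. \<forall>y\<in>X. x \<noteq> y \<longrightarrow> \<not> (adj K)\<^sup>*\<^sup>* x y"
      unfolding Q_def by blast
    define idx where "idx x = (SOME i. i \<le> n \<and> x \<in> Pc i)" for x
    have idx: "idx x \<le> n \<and> x \<in> Pc (idx x)" if "x \<in> X" for x
    proof -
      have "\<exists>i. i \<le> n \<and> x \<in> Pc i" using that X cov by blast
      then show ?thesis unfolding idx_def by (rule someI_ex)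
    qed
    have "inj_on idx X"
    proof (rule inj_onI, rule ccontr)
      fix x y assume xy: "x \<in> X" "y \<in> X" "idx x = idx y" "x \<noteq> y"
      have "(adj K)\<^sup>*\<^sup>* (c (idx x)) x" "(adj K)\<^sup>*\<^sup>* (c (idx x)) y"
        using conn idx xy by metis+
      then have "(adj K)\<^sup>*\<^sup>* x y" using graph_reach_sym[OF gr] by (meson rtranclp_trans)
      then show False using X xy by blast
    qed
    moreover have "idx ` X \<subseteq> {..n}" using idx by auto
    ultimately have "card X \<le> card {..n}"
      by (metis card_image card_mono finite_atMost)
    then show False using X k by simp
  qed
qed



lemma iso_sym:
  assumes "isomorphic K1 K2" shows "isomorphic K2 K1"
proof -
  obtain f where bij: "bij_betw f (verts K1) (verts K2)"
    and ad: "\<forall>x\<in>verts K1. \<forall>y\<in>verts K1. adj K1 x y \<longleftrightarrow> adj K2 (f x) (f y)"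
    using assms unfolding isomorphic_def by blast
  define g where "g = inv_into (verts K1) f"
  have b2: "bij_betw g (verts K2) (verts K1)" unfolding g_def using bij by (rule bij_betw_inv_into)
  have "\<forall>x\<in>verts K2. \<forall>y\<in>verts K2. adj K2 x y \<longleftrightarrow> adj K1 (g x) (g y)"
  proof (intro ballI)
    fix x y assume xy: "x \<in> verts K2" "y \<in> verts K2"
    have "g x \<in> verts K1" "g y \<in> verts K1" using b2 xy bij_betw_apply by fastforce+
    moreover have "f (g x) = x" "f (g y) = y" using xy bij unfolding g_def
      by (auto simp: bij_betw_def f_inv_into_f)
    ultimately show "adj K2 x y \<longleftrightarrow> adj K1 (g x) (g y)" using ad by metis
  qed
  then show ?thesis using b2 unfolding isomorphic_def by blast
qed

lemma construction:
  fixes G :: "'a graph" and g :: "'a \<Rightarrow> 'a" and B :: "'a set"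
  assumes gr: "is_graph G" and cG: "connected_graph G"
    and ginj: "inj_on g (verts G)" and gV: "g ` verts G \<subseteq> verts G"
    and gadj: "\<And>x y. x \<in> verts G \<Longrightarrow> y \<in> verts G \<Longrightarrow> adj G x y \<longleftrightarrow> adj G (g x) (g y)"
    and BV: "B \<subseteq> verts G" and b0: "b0 \<in> B"
    and Bconn: "\<And>b. b \<in> B \<Longrightarrow> (\<lambda>x y. x \<in> B \<and> y \<in> B \<and> adj G x y)\<^sup>*\<^sup>* b0 b"
    and Bdisj: "B \<inter> g ` verts G = {}"
    and Bnoadj: "\<And>b x. b \<in> B \<Longrightarrow> x \<in> verts G \<Longrightarrow> \<not> adj G b (g x)"
  shows "\<exists>S :: 'a graph set. infinite S \<and>
           (\<forall>K\<in>S. is_graph K \<and> equimorphic K G) \<and>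
           (\<forall>K1\<in>S. \<forall>K2\<in>S. K1 \<noteq> K2 \<longrightarrow> \<not> isomorphic K1 K2)"
proof -
  define V where "V = verts G"
  have sym: "adj G x y \<Longrightarrow> adj G y x" for x y using gr unfolding is_graph_def by blast
  have inV: "adj G x y \<Longrightarrow> x \<in> V \<and> y \<in> V" for x y using gr unfolding is_graph_def V_def by blast
  have gi: "inj_on (g^^i) V \<and> (g^^i) ` V \<subseteq> V \<and>
      (\<forall>x\<in>V. \<forall>y\<in>V. adj G x y \<longleftrightarrow> adj G ((g^^i) x) ((g^^i) y))" for i
  proof (induction i)
    case 0 then show ?case by simp
  next
    case (Suc i)
    have "inj_on (g^^i \<circ> g) V" using Suc ginj gV unfolding V_def
      by (meson comp_inj_on inj_on_subset)
    moreover have "(g^^Suc i) = (g^^i \<circ> g)" by (metis funpow_Suc_right)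
    moreover have "(g^^i \<circ> g) ` V \<subseteq> V" using Suc gV unfolding V_def by (auto simp: image_subset_iff)
    moreover have "\<forall>x\<in>V. \<forall>y\<in>V. adj G x y \<longleftrightarrow> adj G ((g^^i \<circ> g) x) ((g^^i \<circ> g) y)"
    proof (intro ballI)
      fix x y assume xy: "x \<in> V" "y \<in> V"
      then have "g x \<in> V" "g y \<in> V" using gV V_def by auto
      then have "adj G (g x) (g y) \<longleftrightarrow> adj G ((g^^i) (g x)) ((g^^i) (g y))" using Suc by blast
      then show "adj G x y \<longleftrightarrow> adj G ((g^^i \<circ> g) x) ((g^^i \<circ> g) y)"
        using gadj xy V_def by simp
    qed
    ultimately show ?case by (simp only:)
  qed
  have giI: "inj_on (g^^i) V" for i using gi by blast
  have giV: "x \<in> V \<Longrightarrow> (g^^i) x \<in> V" for i x using gi by blast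
  have giA: "x \<in> V \<Longrightarrow> y \<in> V \<Longrightarrow> adj G x y \<longleftrightarrow> adj G ((g^^i) x) ((g^^i) y)" for i x y
    using gi by blast
  have BV': "b \<in> B \<Longrightarrow> b \<in> V" for b using BV V_def by blast
  obtain x0 where x0: "x0 \<in> V" using cG unfolding connected_graph_def V_def by blast
  define Pc where "Pc n i = (if i < n then (g^^i) ` B else (g^^n) ` V)" for n i :: nat
  define Sn where "Sn n = (\<Union>i\<le>n. Pc n i)" for n
  define Kn :: "nat \<Rightarrow> 'a graph" where "Kn n = (Sn n, \<lambda>x y. x \<in> Sn n \<and> y \<in> Sn n \<and> adj G x y)" for n
  define c where "c n i = (if i < n then (g^^i) b0 else (g^^n) x0)" for n i :: nat
  have vK: "verts (Kn n) = Sn n" and aK: "adj (Kn n) x y \<longleftrightarrow> x \<in> Sn n \<and> y \<in> Sn n \<and> adj G x y"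
    for n x y by (simp_all add: Kn_def verts_def adj_def)
  have SnV: "Sn n \<subseteq> V" for n
    unfolding Sn_def Pc_def using giV BV' by auto
  have isg: "is_graph (Kn n)" for n unfolding is_graph_def aK vK using sym gr[unfolded is_graph_def] by blast
  have cross: "\<not> adj G x y \<and> x \<noteq> y" if ij: "i < j" "j \<le> n" and x: "x \<in> Pc n i" and y: "y \<in> Pc n j"
    for n i j x y
  proof -
    obtain b where b: "b \<in> B" "x = (g^^i) b" using x ij unfolding Pc_def by auto
    obtain y' where y': "y' \<in> V" "y = (g^^j) y'"
    proof (cases "j < n")
      case True then show ?thesis using that y BV' unfolding Pc_def by auto
    next
      case False then have "j = n" using ij by simp
      then show ?thesis using that y False unfolding Pc_def by auto
    qed
    obtain m where m: "j = i + Suc m" using ij(1) less_iff_Suc_add by auto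
    define w where "w = (g^^m) y'"
    have wV: "w \<in> V" using giV y' unfolding w_def by blast
    have gwV: "g w \<in> V" using wV gV unfolding V_def by blast
    have yw: "y = (g^^i) (g w)"
      using y' m unfolding w_def by (simp only: funpow_add funpow.simps(2) comp_apply)
    have bV: "b \<in> V" using b BV' by blast
    have "\<not> adj G b (g w)" using Bnoadj b wV V_def by blast
    then have "\<not> adj G x y" using giA[OF bV gwV, of i] b yw by simp
    moreover have "b \<noteq> g w" using Bdisj b wV V_def by blast
    then have "x \<noteq> y" using giI[of i] bV gwV b yw by (metis inj_on_contraD)
    ultimately show ?thesis by blast
  qed
  have props: "Q (Suc n) (Kn n) \<and> (\<forall>k > Suc n. \<not> Q k (Kn n))" for n
  proof -
    have cov: "verts (Kn n) = (\<Union>i\<le>n. Pc n i)" using vK Sn_def by simp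
    have cen: "c n i \<in> Pc n i" if "i \<le> n" for i using b0 x0 unfolding c_def Pc_def by auto
    have disj: "Pc n i \<inter> Pc n j = {}" if "i \<le> n" "j \<le> n" "i \<noteq> j" for i j
    proof -
      have "False" if "z \<in> Pc n i" "z \<in> Pc n j" for z
        using that cross[of i j n z z] cross[of j i n z z] \<open>i \<le> n\<close> \<open>j \<le> n\<close> \<open>i \<noteq> j\<close>
        by (cases "i < j") auto
      then show ?thesis by blast
    qed
    have clo: "y \<in> Pc n i" if "i \<le> n" "x \<in> Pc n i" "adj (Kn n) x y" for i x y
    proof -
      have "y \<in> Sn n" "adj G x y" using that aK by auto
      then obtain j where j: "j \<le> n" "y \<in> Pc n j" unfolding Sn_def by blast
      show ?thesis
      proof (cases "i = j")
        case True then show ?thesis using j by simp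
      next
        case False
        then have "i < j \<or> j < i" by arith
        then show ?thesis using cross[of i j n x y] cross[of j i n y x]
            \<open>adj G x y\<close> sym[of x y] j that(1) that(2) by auto
      qed
    qed
    have PcS: "Pc n i \<subseteq> Sn n" if "i \<le> n" for i using that unfolding Sn_def by blast
    have conn: "(adj (Kn n))\<^sup>*\<^sup>* (c n i) x" if ile: "i \<le> n" and xin: "x \<in> Pc n i" for i x
    proof (cases "i < n")
      case True
      then obtain b where b: "b \<in> B" "x = (g^^i) b" using xin unfolding Pc_def by auto
      have "(adj (Kn n))\<^sup>*\<^sup>* ((g^^i) b0) ((g^^i) b)"
      proof (rule rtranclp_map[OF Bconn[OF b(1)]])
        fix u v assume uv: "u \<in> B \<and> v \<in> B \<and> adj G u v"
        have "(g^^i) u \<in> Sn n" "(g^^i) v \<in> Sn n" using uv PcS[OF ile] True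
          unfolding Pc_def by auto
        moreover have "adj G ((g^^i) u) ((g^^i) v)" using uv gi BV V_def by blast
        ultimately show "adj (Kn n) ((g^^i) u) ((g^^i) v)" using aK by blast
      qed
      then show ?thesis using b True unfolding c_def by simp
    next
      case False
      then have i: "i = n" using ile by simp
      obtain v where v: "v \<in> V" "x = (g^^n) v" using xin False unfolding Pc_def by auto
      have "(adj G)\<^sup>*\<^sup>* x0 v" using cG x0 v unfolding connected_graph_def V_def by blast
      have "(adj (Kn n))\<^sup>*\<^sup>* ((g^^n) x0) ((g^^n) v)"
      proof (rule rtranclp_map[OF \<open>(adj G)\<^sup>*\<^sup>* x0 v\<close>])
        fix u w assume uw: "adj G u w"
        then have "u \<in> V" "w \<in> V" using inV by auto
        then have "(g^^n) u \<in> Sn n" "(g^^n) w \<in> Sn n" using PcS[of n]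
          unfolding Pc_def by auto
        moreover have "adj G ((g^^n) u) ((g^^n) w)" using uw gi \<open>u \<in> V\<close> \<open>w \<in> V\<close> by blast
        ultimately show "adj (Kn n) ((g^^n) u) ((g^^n) w)" using aK by blast
      qed
      then show ?thesis using v i unfolding c_def by simp
    qed
    note PQ = pieces_Q[where K="Kn n" and n=n and Pc="Pc n" and c="c n"]
    have "Q (Suc n) (Kn n)" by (rule PQ(1)) (fact isg cov cen conn disj clo)+
    moreover have "\<not> Q k (Kn n)" if "k > Suc n" for k
      by (rule PQ(2)) (fact isg cov cen conn disj clo that)+
    ultimately show ?thesis by blast
  qed
  have equi: "equimorphic (Kn n) G" for n
  proof -
    have "embeds (Kn n) G" unfolding embeds_def
      by (rule exI[of _ id]) (use SnV V_def vK aK in auto)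
    moreover have "embeds G (Kn n)" unfolding embeds_def
    proof (intro exI conjI)
      show "inj_on (g^^n) (verts G)" using giI V_def by blast
      show "(g^^n) ` verts G \<subseteq> verts (Kn n)" using vK unfolding Sn_def Pc_def V_def by fastforce
      then show "\<forall>x\<in>verts G. \<forall>y\<in>verts G. adj G x y \<longleftrightarrow> adj (Kn n) ((g^^n) x) ((g^^n) y)"
        using giA aK vK unfolding V_def by (auto simp: image_subset_iff)
    qed
    ultimately show ?thesis unfolding equimorphic_def by blast
  qed
  have noiso: "\<not> isomorphic (Kn m) (Kn n)" if "m < n" for m n
  proof
    assume "isomorphic (Kn m) (Kn n)"
    then have "isomorphic (Kn n) (Kn m)" by (rule iso_sym)
    then have "Q (Suc n) (Kn m)" using iso_Q isg props by blast
    then show False using props[of m] that by simp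
  qed
  have neq: "Kn m \<noteq> Kn n" if "m \<noteq> n" for m n
  proof
    assume e: "Kn m = Kn n"
    have "m < n \<or> n < m" using that by arith
    then show False using props[of m] props[of n] e by (metis Suc_less_eq)
  qed
  have "inj Kn" using neq unfolding inj_def by blast
  then have "infinite (range Kn)" using finite_imageD by blast
  moreover have "\<forall>K\<in>range Kn. is_graph K \<and> equimorphic K G" using isg equi by blast
  moreover have "\<forall>K1\<in>range Kn. \<forall>K2\<in>range Kn. K1 \<noteq> K2 \<longrightarrow> \<not> isomorphic K1 K2"
  proof (intro ballI impI)
    fix K1 K2 assume "K1 \<in> range Kn" "K2 \<in> range Kn" "K1 \<noteq> K2"
    then obtain m n where mn: "K1 = Kn m" "K2 = Kn n" "m \<noteq> n" by blast
    then have "m < n \<or> n < m" by arith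
    then show "\<not> isomorphic K1 K2" using noiso iso_sym mn by blast
  qed
  ultimately show ?thesis by blast
qed



theorem lemma1p4:
  fixes G :: "'a graph" and H :: "'b graph"
  assumes "is_graph G" and "connected_graph G"
    and "is_graph H" and "equimorphic H G" and "\<not> connected_graph H"
  shows "\<exists>S :: 'a graph set. infinite S \<and>
           (\<forall>K\<in>S. is_graph K \<and> equimorphic K G) \<and>
           (\<forall>K1\<in>S. \<forall>K2\<in>S. K1 \<noteq> K2 \<longrightarrow> \<not> isomorphic K1 K2)"
proof -
  note grG = assms(1) and cG = assms(2) and grH = assms(3)
  have eHG: "embeds H G" and eGH: "embeds G H" using assms(4) unfolding equimorphic_def by auto
  obtain \<phi> where \<phi>12: "inj_on \<phi> (verts H)" "\<phi> ` verts H \<subseteq> verts G"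
    and \<phi>3': "\<forall>x\<in>verts H. \<forall>y\<in>verts H. adj H x y \<longleftrightarrow> adj G (\<phi> x) (\<phi> y)"
    using eHG unfolding embeds_def by (elim exE conjE)
  have \<phi>3: "adj H x y \<longleftrightarrow> adj G (\<phi> x) (\<phi> y)" if "x\<in>verts H" "y\<in>verts H" for x y
    using \<phi>3' that by blast
  note \<phi> = \<phi>12 \<phi>3
  obtain \<psi> where \<psi>12: "inj_on \<psi> (verts G)" "\<psi> ` verts G \<subseteq> verts H"
    and \<psi>3': "\<forall>x\<in>verts G. \<forall>y\<in>verts G. adj G x y \<longleftrightarrow> adj H (\<psi> x) (\<psi> y)"
    using eGH unfolding embeds_def by (elim exE conjE)
  have \<psi>3: "adj G x y \<longleftrightarrow> adj H (\<psi> x) (\<psi> y)" if "x\<in>verts G" "y\<in>verts G" for x y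
    using \<psi>3' that by blast
  note \<psi> = \<psi>12 \<psi>3
  obtain x0 where x0: "x0 \<in> verts G" using cG unfolding connected_graph_def by blast
  define c where "c = \<psi> x0"
  have cH: "c \<in> verts H" using x0 \<psi> c_def by blast
  let ?R = "(adj H)\<^sup>*\<^sup>*"
  have symR: "?R x y \<Longrightarrow> ?R y x" for x y using graph_reach_sym[OF grH] by blast
  have inVH: "adj H x y \<Longrightarrow> x \<in> verts H \<and> y \<in> verts H" for x y
    using grH unfolding is_graph_def by blast
  have inVG: "adj G x y \<Longrightarrow> x \<in> verts G \<and> y \<in> verts G" for x y
    using grG unfolding is_graph_def by blast
  obtain u w where uw: "u \<in> verts H" "w \<in> verts H" "\<not> ?R u w"
    using assms(5) cH unfolding connected_graph_def by blast
  obtain d where d: "d \<in> verts H" "\<not> ?R c d"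
  proof (cases "?R c u")
    case True
    have "\<not> ?R c w"
    proof
      assume "?R c w"
      then have "?R u w" using symR[OF True] by (meson rtranclp_trans)
      then show False using uw by blast
    qed
    then show ?thesis using that uw by blast
  next
    case False then show ?thesis using that uw by blast
  qed
  define D where "D = {y. ?R d y}"
  have reachc: "?R c (\<psi> x)" if "x \<in> verts G" for x
  proof -
    have "(adj G)\<^sup>*\<^sup>* x0 x" using cG x0 that unfolding connected_graph_def by blast
    then show ?thesis unfolding c_def
      by (rule rtranclp_map) (use \<psi>(3) inVG in blast)
  qed
  have notD: "\<psi> x \<notin> D" if "x \<in> verts G" for x
  proof
    assume "\<psi> x \<in> D"
    then have "?R d (\<psi> x)" unfolding D_def by simp
    then have "?R d c" using symR[OF reachc[OF that]] by (meson rtranclp_trans)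
    then show False using symR d by blast
  qed
  have DH: "D \<subseteq> verts H"
  proof
    fix y assume "y \<in> D"
    then have "?R d y" unfolding D_def by simp
    then show "y \<in> verts H" by (induction rule: rtranclp_induct) (use d inVH in auto)
  qed
  have Dpath: "(\<lambda>a b. a \<in> D \<and> b \<in> D \<and> adj H a b)\<^sup>*\<^sup>* d y" if "?R d y" for y
    using that
  proof (induction rule: rtranclp_induct)
    case base then show ?case by simp
  next
    case (step y z)
    have "y \<in> D" "z \<in> D" using step.hyps unfolding D_def by auto
    then show ?case using step.IH step.hyps(2) rtranclp.rtrancl_into_rtrancl[of "\<lambda>a b. a \<in> D \<and> b \<in> D \<and> adj H a b" d y z]
      by blast
  qed
  define g where "g = \<phi> \<circ> \<psi>"
  define B where "B = \<phi> ` D"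
  show ?thesis
  proof (rule construction[OF grG cG, of g B "\<phi> d"])
    show "inj_on g (verts G)" unfolding g_def using \<phi> \<psi> by (meson comp_inj_on inj_on_subset)
    show "g ` verts G \<subseteq> verts G" unfolding g_def using \<phi>12 \<psi>12 by (auto simp: image_subset_iff)
    show "adj G x y \<longleftrightarrow> adj G (g x) (g y)" if "x \<in> verts G" "y \<in> verts G" for x y
    proof -
      have "\<psi> x \<in> verts H" "\<psi> y \<in> verts H" using that \<psi> by auto
      then show ?thesis unfolding g_def using \<phi>(3) \<psi>(3) that by simp
    qed
    show "B \<subseteq> verts G" unfolding B_def using DH \<phi> by auto
    show "\<phi> d \<in> B" unfolding B_def D_def by simp
    show "(\<lambda>x y. x \<in> B \<and> y \<in> B \<and> adj G x y)\<^sup>*\<^sup>* (\<phi> d) b" if bB: "b \<in> B" for b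
    proof -
      obtain y where y: "y \<in> D" "b = \<phi> y" using bB B_def by blast
      have "(\<lambda>a b. a \<in> D \<and> b \<in> D \<and> adj H a b)\<^sup>*\<^sup>* d y" using Dpath y D_def by blast
      then show ?thesis unfolding y(2)
      proof (rule rtranclp_map)
        fix a b assume ab: "a \<in> D \<and> b \<in> D \<and> adj H a b"
        then have "adj G (\<phi> a) (\<phi> b)" using \<phi>(3) DH by blast
        then show "\<phi> a \<in> B \<and> \<phi> b \<in> B \<and> adj G (\<phi> a) (\<phi> b)" using ab B_def by blast
      qed
    qed
    show "B \<inter> g ` verts G = {}"
    proof (rule ccontr)
      assume "B \<inter> g ` verts G \<noteq> {}"
      then obtain y x where yx: "y \<in> D" "x \<in> verts G" "\<phi> y = \<phi> (\<psi> x)"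
        unfolding B_def g_def by auto
      have "\<psi> x \<in> verts H" using yx \<psi> by auto
      then have "y = \<psi> x" using yx \<phi>(1) DH by (meson inj_onD subsetD)
      then show False using notD yx by blast
    qed
    show "\<not> adj G b (g x)" if bB: "b \<in> B" and xG: "x \<in> verts G" for b x
    proof
      assume a: "adj G b (g x)"
      obtain y where y: "y \<in> D" "b = \<phi> y" using bB B_def by blast
      have "\<psi> x \<in> verts H" using xG \<psi> by auto
      then have "adj H y (\<psi> x)" using a y \<phi>(3) DH unfolding g_def by auto
      then have "\<psi> x \<in> D" using y unfolding D_def by (simp add: rtranclp.rtrancl_into_rtrancl)
      then show False using notD xG by blast
    qed
  qed
qed

end
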